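(* Every dp-minimal integral domain $R$ is divided: for every prime ideal $\mathfrak p$ of $R$ and every $a\in R$, either $\mathfrak p\subseteq aR$ or $aR\subseteq\mathfrak p$ (equivalently, $\mathfrak p=\mathfrak pR_{\mathfrak p}$). In particular, there exists $N\in\mathbb N$ such that for all $a,b$ in the maximal ideal of $R$, either $a\in bR$ or $b^N\in aR$.
   Context: Rings are commutative with identity; dp-minimal means the theory in the language of rings has dp-rank $1$ (such domains are local). A prime ideal $\mathfrak p$ is divided if it is comparable under inclusion with every principal ideal; a ring is divided if every prime ideal is divided. *)

theory Defs
  imports "HOL-Algebra.Algebra"
begin

datatype rterm = RVar nat | RZero | ROne | RAdd rterm rterm | RNeg rterm | RMul rterm rterm

datatype rform = REq rterm rterm | RNot rform | RAnd rform rform | REx nat rform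

fun rt_eval :: "('a, 'b) ring_scheme \<Rightarrow> (nat \<Rightarrow> 'a) \<Rightarrow> rterm \<Rightarrow> 'a" where
  "rt_eval R e (RVar n) = e n"
| "rt_eval R e RZero = \<zero>\<^bsub>R\<^esub>"
| "rt_eval R e ROne = \<one>\<^bsub>R\<^esub>"
| "rt_eval R e (RAdd s t) = rt_eval R e s \<oplus>\<^bsub>R\<^esub> rt_eval R e t"
| "rt_eval R e (RNeg s) = \<ominus>\<^bsub>R\<^esub> rt_eval R e s"
| "rt_eval R e (RMul s t) = rt_eval R e s \<otimes>\<^bsub>R\<^esub> rt_eval R e t"

fun rsat :: "('a, 'b) ring_scheme \<Rightarrow> (nat \<Rightarrow> 'a) \<Rightarrow> rform \<Rightarrow> bool" where
  "rsat R e (REq s t) = (rt_eval R e s = rt_eval R e t)"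
| "rsat R e (RNot f) = (\<not> rsat R e f)"
| "rsat R e (RAnd f g) = (rsat R e f \<and> rsat R e g)"
| "rsat R e (REx n f) = (\<exists>a\<in>carrier R. rsat R (e(n := a)) f)"

text \<open>An ICT pattern of depth 2 and size n in R for formulas phi(x;y), psi(x;z),
  where the object variable x is variable 0 and the parameter tuples are given by
  environments (all other variables).\<close>
definition ict2_pattern :: "('a, 'b) ring_scheme \<Rightarrow> rform \<Rightarrow> rform \<Rightarrow> nat \<Rightarrow> bool" where
  "ict2_pattern R \<phi> \<psi> n \<longleftrightarrow>
     (\<exists>b c :: nat \<Rightarrow> nat \<Rightarrow> 'a.
        (\<forall>i<n. \<forall>v. b i v \<in> carrier R) \<and> (\<forall>j<n. \<forall>v. c j v \<in> carrier R) \<and>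
        (\<forall>i<n. \<forall>j<n. \<exists>a\<in>carrier R.
            (\<forall>k<n. rsat R ((b k)(0 := a)) \<phi> \<longleftrightarrow> k = i) \<and>
            (\<forall>l<n. rsat R ((c l)(0 := a)) \<psi> \<longleftrightarrow> l = j)))"

text \<open>Th(R) has dp-rank 1 (dp-minimal): there is no ICT pattern of depth 2 in a
  single object variable in any model of Th(R); by compactness (Th(R) is complete),
  this is equivalent to: for all formulas phi, psi the finite patterns in R have
  bounded size.\<close>
definition dp_minimal :: "('a, 'b) ring_scheme \<Rightarrow> bool" where
  "dp_minimal R \<longleftrightarrow> (\<forall>\<phi> \<psi>. \<exists>n. \<not> ict2_pattern R \<phi> \<psi> n)"

end

theory Submission
  imports Defs
begin

definition Fm :: rform where
  "Fm = REx 3 (REq (RVar 0) (RAdd (RVar 1) (RMul (RVar 2) (RVar 3))))"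

context domain begin

lemma PIdl_iff: "x \<in> PIdl y \<longleftrightarrow> (\<exists>r\<in>carrier R. x = r \<otimes> y)"
  unfolding cgenideal_def by auto

lemma PIdl_mult:
  assumes "x \<in> PIdl y" "z \<in> carrier R" "y \<in> carrier R"
  shows "z \<otimes> x \<in> PIdl y"
proof -
  obtain r where r: "r \<in> carrier R" "x = r \<otimes> y" using assms(1) PIdl_iff by auto
  have "z \<otimes> x = (z \<otimes> r) \<otimes> y" using r assms by (simp add: m_assoc)
  thus ?thesis using r assms PIdl_iff by blast
qed

lemma PIdl_swap:
  assumes "a \<ominus> b \<in> PIdl y" "a \<in> carrier R" "b \<in> carrier R" "y \<in> carrier R"
  shows "b \<ominus> a \<in> PIdl y"
proof -
  obtain r where r: "r \<in> carrier R" "a \<ominus> b = r \<otimes> y" using assms(1) PIdl_iff by auto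
  have "b \<ominus> a = (\<ominus> r) \<otimes> y"
  proof -
    have "b \<ominus> a = \<ominus> (a \<ominus> b)" using assms by algebra
    also have "\<dots> = (\<ominus> r) \<otimes> y" using r assms by algebra
    finally show ?thesis .
  qed
  thus ?thesis using r assms PIdl_iff by blast
qed

lemma PIdl_add_iff:
  assumes "x \<in> carrier R" "z \<in> PIdl y" "y \<in> carrier R"
  shows "x \<oplus> z \<in> PIdl y \<longleftrightarrow> x \<in> PIdl y"
proof -
  obtain r where r: "r \<in> carrier R" "z = r \<otimes> y" using assms(2) PIdl_iff by auto
  show ?thesis
  proof
    assume "x \<oplus> z \<in> PIdl y"
    then obtain s where s: "s \<in> carrier R" "x \<oplus> z = s \<otimes> y" using PIdl_iff by auto
    have "x = (s \<ominus> r) \<otimes> y"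
    proof -
      have "x = (x \<oplus> z) \<ominus> z" using assms r by algebra
      also have "\<dots> = s \<otimes> y \<ominus> r \<otimes> y" using s r by simp
      also have "\<dots> = (s \<ominus> r) \<otimes> y" using s r assms by algebra
      finally show ?thesis .
    qed
    thus "x \<in> PIdl y" using s r PIdl_iff by blast
  next
    assume "x \<in> PIdl y"
    then obtain s where s: "s \<in> carrier R" "x = s \<otimes> y" using PIdl_iff by auto
    have "x \<oplus> z = (s \<oplus> r) \<otimes> y" using s r assms by algebra
    thus "x \<oplus> z \<in> PIdl y" using s r PIdl_iff by blast
  qed
qed

lemma rsat_Fm:
  assumes "\<And>t. e t \<in> carrier R"
  shows "rsat R e Fm \<longleftrightarrow> e 0 \<ominus> e 1 \<in> PIdl (e 2)"
proof -
  have "rsat R e Fm \<longleftrightarrow> (\<exists>w\<in>carrier R. e 0 = e 1 \<oplus> e 2 \<otimes> w)"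
    unfolding Fm_def by simp
  also have "\<dots> \<longleftrightarrow> (\<exists>w\<in>carrier R. e 0 \<ominus> e 1 = w \<otimes> e 2)"
  proof (intro bex_cong refl)
    fix w assume w: "w \<in> carrier R"
    have c: "e 0 \<in> carrier R" "e 1 \<in> carrier R" "e 2 \<in> carrier R" using assms by auto
    show "e 0 = e 1 \<oplus> e 2 \<otimes> w \<longleftrightarrow> e 0 \<ominus> e 1 = w \<otimes> e 2"
    proof
      assume "e 0 = e 1 \<oplus> e 2 \<otimes> w"
      thus "e 0 \<ominus> e 1 = w \<otimes> e 2" using c w by algebra
    next
      assume h: "e 0 \<ominus> e 1 = w \<otimes> e 2"
      have "e 0 = e 1 \<oplus> (e 0 \<ominus> e 1)" using c by algebra
      also have "\<dots> = e 1 \<oplus> w \<otimes> e 2" using h by simp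
      also have "\<dots> = e 1 \<oplus> e 2 \<otimes> w" using c w m_comm by simp
      finally show "e 0 = e 1 \<oplus> e 2 \<otimes> w" .
    qed
  qed
  also have "\<dots> \<longleftrightarrow> e 0 \<ominus> e 1 \<in> PIdl (e 2)" using PIdl_iff by auto
  finally show ?thesis .
qed

lemma PIdl_carrier: "y \<in> carrier R \<Longrightarrow> x \<in> PIdl y \<Longrightarrow> x \<in> carrier R"
  using PIdl_iff by auto

lemma pattern:
  assumes u: "u \<in> carrier R" and v: "v \<in> carrier R"
  and h: "\<And>i. i < n \<Longrightarrow> h i \<in> PIdl u"
  and k: "\<And>j. j < n \<Longrightarrow> k j \<in> PIdl v"
  and hd: "\<And>i i'. i < n \<Longrightarrow> i' < n \<Longrightarrow> h i \<ominus> h i' \<in> PIdl v \<Longrightarrow> i = i'"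
  and kd: "\<And>j j'. j < n \<Longrightarrow> j' < n \<Longrightarrow> k j \<ominus> k j' \<in> PIdl u \<Longrightarrow> j = j'"
  shows "ict2_pattern R Fm Fm n"
proof -
  have hc: "\<And>i. i < n \<Longrightarrow> h i \<in> carrier R" using h u PIdl_carrier by blast
  have kc: "\<And>i. i < n \<Longrightarrow> k i \<in> carrier R" using k v PIdl_carrier by blast
  define bb :: "nat \<Rightarrow> nat \<Rightarrow> 'a" where "bb = (\<lambda>i t. if t = 1 \<and> i < n then h i else v)"
  define cc :: "nat \<Rightarrow> nat \<Rightarrow> 'a" where "cc = (\<lambda>i t. if t = 1 \<and> i < n then k i else u)"
  have bbc: "\<And>i t. bb i t \<in> carrier R" unfolding bb_def using hc v by auto
  have ccc: "\<And>i t. cc i t \<in> carrier R" unfolding cc_def using kc u by auto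
  show ?thesis unfolding ict2_pattern_def
  proof (intro exI conjI allI impI)
    show "\<And>i v. i < n \<Longrightarrow> bb i v \<in> carrier R" using bbc by auto
    show "\<And>i v. i < n \<Longrightarrow> cc i v \<in> carrier R" using ccc by auto
    fix i j assume i: "i < n" and j: "j < n"
    let ?a = "h i \<oplus> k j"
    have ac: "?a \<in> carrier R" using hc kc i j by auto
    show "\<exists>a\<in>carrier R. (\<forall>l<n. rsat R ((bb l)(0 := a)) Fm = (l = i)) \<and>
                          (\<forall>l<n. rsat R ((cc l)(0 := a)) Fm = (l = j))"
    proof (intro bexI[OF _ ac] conjI allI impI)
      fix l assume l: "l < n"
      have e: "\<And>t. ((bb l)(0 := ?a)) t \<in> carrier R" using bbc ac by auto
      have "rsat R ((bb l)(0 := ?a)) Fm \<longleftrightarrow> ?a \<ominus> h l \<in> PIdl v"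
        using rsat_Fm[where e="(bb l)(0 := ?a)", OF e] l by (simp add: bb_def)
      also have "?a \<ominus> h l = (h i \<ominus> h l) \<oplus> k j" using hc kc i j l by algebra
      also have "(h i \<ominus> h l) \<oplus> k j \<in> PIdl v \<longleftrightarrow> h i \<ominus> h l \<in> PIdl v"
        using PIdl_add_iff[OF _ k[OF j] v] hc i l by auto
      also have "\<dots> \<longleftrightarrow> l = i"
      proof
        assume "h i \<ominus> h l \<in> PIdl v" thus "l = i" using hd i l by auto
      next
        assume "l = i"
        hence "h i \<ominus> h l = \<zero> \<otimes> v" using hc i v by simp
        thus "h i \<ominus> h l \<in> PIdl v" using PIdl_iff by blast
      qed
      finally show "rsat R ((bb l)(0 := ?a)) Fm = (l = i)" .
    next
      fix l assume l: "l < n"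
      have e: "\<And>t. ((cc l)(0 := ?a)) t \<in> carrier R" using ccc ac by auto
      have "rsat R ((cc l)(0 := ?a)) Fm \<longleftrightarrow> ?a \<ominus> k l \<in> PIdl u"
        using rsat_Fm[where e="(cc l)(0 := ?a)", OF e] l by (simp add: cc_def)
      also have "?a \<ominus> k l = (k j \<ominus> k l) \<oplus> h i" using hc kc i j l by algebra
      also have "(k j \<ominus> k l) \<oplus> h i \<in> PIdl u \<longleftrightarrow> k j \<ominus> k l \<in> PIdl u"
        using PIdl_add_iff[OF _ h[OF i] u] kc j l by auto
      also have "\<dots> \<longleftrightarrow> l = j"
      proof
        assume "k j \<ominus> k l \<in> PIdl u" thus "l = j" using kd j l by auto
      next
        assume "l = j"
        hence "k j \<ominus> k l = \<zero> \<otimes> u" using kc j u by simp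
        thus "k j \<ominus> k l \<in> PIdl u" using PIdl_iff by blast
      qed
      finally show "rsat R ((cc l)(0 := ?a)) Fm = (l = j)" .
    qed
  qed
qed

lemma pow_nonzero: "y \<in> carrier R \<Longrightarrow> y \<noteq> \<zero> \<Longrightarrow> y [^] (n::nat) \<noteq> \<zero>"
  by (induction n) (auto simp: integral_iff)

lemma geom_diff:
  assumes x: "x \<in> carrier R" and y: "y \<in> carrier R" and y0: "y \<noteq> \<zero>"
  and ij: "(i::nat) < j" "i < m"
  and mem: "x \<otimes> y [^] i \<ominus> x \<otimes> y [^] j \<in> PIdl (y [^] m)"
  shows "x \<in> PIdl y"
proof -
  obtain r where r: "r \<in> carrier R" "x \<otimes> y [^] i \<ominus> x \<otimes> y [^] j = r \<otimes> y [^] m"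
    using mem PIdl_iff by auto
  define p where "p = j - i - 1"
  define q where "q = m - i - 1"
  have jj: "j = i + Suc p" using ij p_def by simp
  have mm: "m = i + Suc q" using ij q_def by simp
  define Y where "Y = y [^] i"
  define P where "P = y [^] p"
  define Q where "Q = y [^] q"
  have c: "Y \<in> carrier R" "P \<in> carrier R" "Q \<in> carrier R" using y by (auto simp: Y_def P_def Q_def)
  have Y0: "Y \<noteq> \<zero>" using pow_nonzero y y0 Y_def by auto
  have yj: "y [^] j = Y \<otimes> (P \<otimes> y)"
    unfolding jj Y_def P_def using y by (simp add: nat_pow_mult[symmetric] m_assoc)
  have ym: "y [^] m = Y \<otimes> (Q \<otimes> y)"
    unfolding mm Y_def Q_def using y by (simp add: nat_pow_mult[symmetric] m_assoc)
  have "Y \<otimes> (x \<ominus> x \<otimes> (P \<otimes> y)) = x \<otimes> Y \<ominus> x \<otimes> (Y \<otimes> (P \<otimes> y))"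
    using c x y by algebra
  also have "\<dots> = r \<otimes> (Y \<otimes> (Q \<otimes> y))" using r(2) yj ym Y_def by simp
  also have "\<dots> = Y \<otimes> (r \<otimes> (Q \<otimes> y))" using c r y by algebra
  finally have e: "x \<ominus> x \<otimes> (P \<otimes> y) = r \<otimes> (Q \<otimes> y)"
    using m_lcancel[OF Y0] c r x y by auto
  have "x = (x \<ominus> x \<otimes> (P \<otimes> y)) \<oplus> x \<otimes> (P \<otimes> y)" using c x y by algebra
  also have "\<dots> = r \<otimes> (Q \<otimes> y) \<oplus> x \<otimes> (P \<otimes> y)" using e by simp
  also have "\<dots> = (r \<otimes> Q \<oplus> x \<otimes> P) \<otimes> y" using c x y r by algebra
  finally show ?thesis using c x r PIdl_iff by blast
qed

lemma geom_diff2: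
  assumes x: "x \<in> carrier R" and y: "y \<in> carrier R" and y0: "y \<noteq> \<zero>"
  and ij: "(i::nat) \<noteq> j" "i < m" "j < m"
  and mem: "x \<otimes> y [^] i \<ominus> x \<otimes> y [^] j \<in> PIdl (y [^] m)"
  shows "x \<in> PIdl y"
proof (cases "i < j")
  case True thus ?thesis by (rule geom_diff[OF x y y0 _ ij(2) mem])
next
  case False
  hence ji: "j < i" using ij by auto
  have "x \<otimes> y [^] j \<ominus> x \<otimes> y [^] i \<in> PIdl (y [^] m)"
    using PIdl_swap[OF mem] x y by auto
  thus ?thesis using geom_diff[OF x y y0 ji ij(3)] by blast
qed

lemma comax_power:
  assumes c: "c \<in> carrier R" and d: "d \<in> carrier R" and cd: "c \<oplus> d = \<one>"
  shows "c [^] (n::nat) \<ominus> \<one> \<in> PIdl d"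
proof (induction n)
  case 0
  have "c [^] (0::nat) \<ominus> \<one> = \<zero> \<otimes> d" using d by simp
  thus ?case using PIdl_iff by blast
next
  case (Suc n)
  then obtain r where r: "r \<in> carrier R" "c [^] n \<ominus> \<one> = r \<otimes> d" using PIdl_iff by auto
  define Z where "Z = c [^] n"
  have Z: "Z \<in> carrier R" using c Z_def by simp
  have cm: "c \<ominus> \<one> = \<ominus> d"
  proof -
    have "c \<ominus> \<one> = c \<ominus> (c \<oplus> d)" using cd by simp
    also have "\<dots> = \<ominus> d" using c d by algebra
    finally show ?thesis .
  qed
  have "c [^] Suc n \<ominus> \<one> = Z \<otimes> c \<ominus> \<one>" by (simp add: Z_def)
  also have "\<dots> = (Z \<ominus> \<one>) \<otimes> c \<oplus> (c \<ominus> \<one>)" using Z c by algebra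
  also have "\<dots> = (r \<otimes> d) \<otimes> c \<oplus> \<ominus> d" using r cm Z_def by simp
  also have "\<dots> = (r \<otimes> c \<ominus> \<one>) \<otimes> d" using r c d by algebra
  finally show ?case using r c PIdl_iff by blast
qed

lemma unit_of_inv: "t \<in> carrier R \<Longrightarrow> d \<in> carrier R \<Longrightarrow> \<one> = t \<otimes> d \<Longrightarrow> d \<in> Units R"
  unfolding Units_def using m_comm by auto

lemma comax_unit:
  assumes c: "c \<in> carrier R" and d: "d \<in> carrier R" and cd: "c \<oplus> d = \<one>"
    and mem: "c [^] (n::nat) \<in> PIdl d"
  shows "d \<in> Units R"
proof -
  obtain r where r: "r \<in> carrier R" "c [^] n \<ominus> \<one> = r \<otimes> d" using comax_power[OF c d cd, of n] PIdl_iff by auto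
  obtain s where s: "s \<in> carrier R" "c [^] n = s \<otimes> d" using mem PIdl_iff by auto
  define Z where "Z = c [^] n"
  have Z: "Z \<in> carrier R" using c Z_def by simp
  have "\<one> = Z \<ominus> (Z \<ominus> \<one>)" using Z by algebra
  also have "\<dots> = s \<otimes> d \<ominus> r \<otimes> d" using r s Z_def by simp
  also have "\<dots> = (s \<ominus> r) \<otimes> d" using r s d by algebra
  finally show ?thesis using unit_of_inv r s d by blast
qed

lemma comax_pattern:
  assumes c: "c \<in> carrier R" and d: "d \<in> carrier R" and cd: "c \<oplus> d = \<one>"
    and cu: "c \<notin> Units R" and du: "d \<notin> Units R"
  shows "ict2_pattern R Fm Fm m"
proof -
  have dc: "d \<oplus> c = \<one>" using cd c d a_comm by simp
  have d0: "d \<noteq> \<zero>" using cd cu c by auto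
  have c0: "c \<noteq> \<zero>" using dc du d by auto
  show ?thesis
  proof (rule pattern[where u="c [^] m" and v="d [^] m" and h="\<lambda>i. c [^] m \<otimes> d [^] i"
        and k="\<lambda>i. d [^] m \<otimes> c [^] i"])
    show "c [^] m \<in> carrier R" "d [^] m \<in> carrier R" using c d by auto
    fix i assume "i < m"
    have "c [^] m \<otimes> d [^] i = d [^] i \<otimes> c [^] m" using c d m_comm by simp
    thus "c [^] m \<otimes> d [^] i \<in> PIdl (c [^] m)" using c d PIdl_iff by auto
  next
    fix i assume "i < m"
    have "d [^] m \<otimes> c [^] i = c [^] i \<otimes> d [^] m" using c d m_comm by simp
    thus "d [^] m \<otimes> c [^] i \<in> PIdl (d [^] m)" using c d PIdl_iff by auto
  next
    fix i i' assume i: "i < m" "i' < m" and mem: "c [^] m \<otimes> d [^] i \<ominus> c [^] m \<otimes> d [^] i' \<in> PIdl (d [^] m)"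
    show "i = i'"
    proof (rule ccontr)
      assume "i \<noteq> i'"
      hence "c [^] m \<in> PIdl d" using geom_diff2[OF _ d d0 _ i mem] c by auto
      thus False using comax_unit[OF c d cd] du by blast
    qed
  next
    fix i i' assume i: "i < m" "i' < m" and mem: "d [^] m \<otimes> c [^] i \<ominus> d [^] m \<otimes> c [^] i' \<in> PIdl (c [^] m)"
    show "i = i'"
    proof (rule ccontr)
      assume "i \<noteq> i'"
      hence "d [^] m \<in> PIdl c" using geom_diff2[OF _ c c0 _ i mem] d by auto
      thus False using comax_unit[OF d c dc] cu by blast
    qed
  qed
qed

lemma unit_sub:
  assumes np: "\<not> ict2_pattern R Fm Fm m" and b: "b \<in> carrier R" and bu: "b \<notin> Units R"
    and k: "0 < k"
  shows "\<one> \<ominus> b [^] (k::nat) \<in> Units R"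
proof (rule ccontr)
  assume du: "\<one> \<ominus> b [^] k \<notin> Units R"
  have cc: "b [^] k \<in> carrier R" using b by simp
  have cd: "b [^] k \<oplus> (\<one> \<ominus> b [^] k) = \<one>" using cc by algebra
  have cu: "b [^] k \<notin> Units R"
  proof
    assume "b [^] k \<in> Units R"
    moreover have "b [^] k = b \<otimes> b [^] (k - 1)"
    proof -
      obtain k' where kk: "k = Suc k'" using k by (cases k) auto
      have "b [^] k = b [^] k' \<otimes> b" unfolding kk by simp
      also have "\<dots> = b \<otimes> b [^] k'" using b by (simp add: m_comm)
      finally show ?thesis using kk by simp
    qed
    ultimately have "b \<otimes> b [^] (k - 1) \<in> Units R" by simp
    hence "b \<in> Units R" using unit_factor[of b "b [^] (k - 1)"] b by simp
    thus False using bu by simp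
  qed
  have "\<one> \<ominus> b [^] k \<in> carrier R" using cc by simp
  thus False using comax_pattern[OF cc _ cd cu du] np by blast
qed

lemma key:
  assumes np: "\<not> ict2_pattern R Fm Fm m" and a: "a \<in> carrier R" and b: "b \<in> carrier R"
  shows "a \<in> PIdl b \<or> b [^] (2 * m) \<in> PIdl a"
proof (rule ccontr)
  assume "\<not> ?thesis"
  hence na: "a \<notin> PIdl b" and nb: "b [^] (2 * m) \<notin> PIdl a" by auto
  have m0: "m \<noteq> 0"
  proof
    assume "m = 0"
    hence "ict2_pattern R Fm Fm m" by (simp add: ict2_pattern_def)
    thus False using np by simp
  qed
  have bu: "b \<notin> Units R"
  proof
    assume bu: "b \<in> Units R"
    have "a = (a \<otimes> inv b) \<otimes> b" using a b bu by (simp add: m_assoc)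
    thus False using na a b bu PIdl_iff by (metis Units_inv_closed m_closed)
  qed
  have b0: "b \<noteq> \<zero>"
  proof
    assume "b = \<zero>"
    hence "b [^] (2 * m) = \<zero> \<otimes> a" using m0 a by (simp add: nat_pow_zero)
    thus False using nb PIdl_iff by blast
  qed
  have kd_aux: "b [^] (2 * m) \<in> PIdl a"
    if j: "j < j'" "j' < m" and mem: "b [^] (m + j) \<ominus> b [^] (m + j') \<in> PIdl a" for j j'
  proof -
    define Xb where "Xb = b [^] (m + j)"
    define w where "w = \<one> \<ominus> b [^] (j' - j)"
    have Xb: "Xb \<in> carrier R" using b Xb_def by simp
    have w: "w \<in> Units R" using unit_sub[OF np b bu] j w_def by simp
    have wc: "w \<in> carrier R" using w by auto
    have "b [^] (m + j') = Xb \<otimes> b [^] (j' - j)" unfolding Xb_def using b j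
      by (simp add: nat_pow_mult)
    hence "b [^] (m + j) \<ominus> b [^] (m + j') = Xb \<ominus> Xb \<otimes> b [^] (j' - j)" using Xb_def by simp
    also have "\<dots> = w \<otimes> Xb" unfolding w_def using Xb b nat_pow_closed[OF b, of "j' - j"] by algebra
    finally have "w \<otimes> Xb \<in> PIdl a" using mem by simp
    hence "inv w \<otimes> (w \<otimes> Xb) \<in> PIdl a" using PIdl_mult w a by auto
    moreover have "inv w \<otimes> (w \<otimes> Xb) = Xb"
    proof -
      have "(inv w \<otimes> w) \<otimes> Xb = inv w \<otimes> (w \<otimes> Xb)"
        by (rule m_assoc[OF Units_inv_closed[OF w] Units_closed[OF w] Xb])
      moreover have "(inv w \<otimes> w) \<otimes> Xb = Xb" using w Xb by (simp add: Units_l_inv)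
      ultimately show ?thesis by simp
    qed
    ultimately have XI: "Xb \<in> PIdl a" by simp
    have "b [^] (m - j) \<otimes> Xb = b [^] (m - j + (m + j))" unfolding Xb_def using b
      by (simp add: nat_pow_mult)
    moreover have "m - j + (m + j) = 2 * m" using j by simp
    ultimately have "b [^] (2 * m) = b [^] (m - j) \<otimes> Xb" by simp
    thus ?thesis using PIdl_mult[OF XI _ a] b by simp
  qed
  have "ict2_pattern R Fm Fm m"
  proof (rule pattern[where u="a" and v="b [^] m" and h="\<lambda>i. a \<otimes> b [^] i"
        and k="\<lambda>i. b [^] (m + i)"])
    show "a \<in> carrier R" "b [^] m \<in> carrier R" using a b by auto
    fix i assume "i < m"
    have "a \<otimes> b [^] i = b [^] i \<otimes> a" using a b m_comm by simp
    thus "a \<otimes> b [^] i \<in> PIdl a" using a b PIdl_iff by auto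
  next
    fix i assume "i < m"
    have "b [^] (m + i) = b [^] i \<otimes> b [^] m" using b by (simp add: nat_pow_mult add.commute)
    thus "b [^] (m + i) \<in> PIdl (b [^] m)" using b PIdl_iff by auto
  next
    fix i i' assume i: "i < m" "i' < m" and mem: "a \<otimes> b [^] i \<ominus> a \<otimes> b [^] i' \<in> PIdl (b [^] m)"
    show "i = i'"
    proof (rule ccontr)
      assume "i \<noteq> i'"
      hence "a \<in> PIdl b" using geom_diff2[OF a b b0 _ i mem] by auto
      thus False using na by simp
    qed
  next
    fix i i' assume i: "i < m" "i' < m" and mem: "b [^] (m + i) \<ominus> b [^] (m + i') \<in> PIdl a"
    show "i = i'"
    proof (rule ccontr)
      assume ne: "i \<noteq> i'"
      show False
      proof (cases "i < i'")
        case True thus False using kd_aux[OF True i(2) mem] nb by simp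
      next
        case False
        hence "i' < i" using ne by simp
        moreover have "b [^] (m + i') \<ominus> b [^] (m + i) \<in> PIdl a" using PIdl_swap[OF mem] a b by simp
        ultimately show False using kd_aux i nb by blast
      qed
    qed
  qed
  thus False using np by simp
qed


end

theorem mainTheorem10:
  fixes R :: "('a, 'b) ring_scheme"
  assumes "domain R" and "dp_minimal R"
  shows "(\<forall>P a. primeideal P R \<longrightarrow> a \<in> carrier R \<longrightarrow>
              P \<subseteq> PIdl\<^bsub>R\<^esub> a \<or> PIdl\<^bsub>R\<^esub> a \<subseteq> P)
       \<and> (\<exists>N::nat. \<forall>M. maximalideal M R \<longrightarrow>
              (\<forall>a\<in>M. \<forall>b\<in>M. a \<in> PIdl\<^bsub>R\<^esub> b \<or> b [^]\<^bsub>R\<^esub> N \<in> PIdl\<^bsub>R\<^esub> a))"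
proof -
  interpret domain R by fact
  obtain m where np: "\<not> ict2_pattern R Fm Fm m"
    using assms(2) unfolding dp_minimal_def by blast
  define N where "N = 2 * m"
  have K: "\<And>a b. a \<in> carrier R \<Longrightarrow> b \<in> carrier R \<Longrightarrow> a \<in> PIdl\<^bsub>R\<^esub> b \<or> b [^]\<^bsub>R\<^esub> N \<in> PIdl\<^bsub>R\<^esub> a"
    using key[OF np] N_def by blast
  show ?thesis
  proof (intro conjI allI impI)
    fix P a assume P: "primeideal P R" and a: "a \<in> carrier R"
    interpret P: primeideal P R by fact
    have powP: "a [^]\<^bsub>R\<^esub> (n::nat) \<in> P \<Longrightarrow> a \<in> P" for n
    proof (induction n)
      case 0
      hence "P = carrier R" using P.one_imp_carrier by simp
      thus ?case using P.I_notcarr by simp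
    next
      case (Suc n)
      hence "a [^]\<^bsub>R\<^esub> n \<otimes>\<^bsub>R\<^esub> a \<in> P" by simp
      hence "a [^]\<^bsub>R\<^esub> n \<in> P \<or> a \<in> P" using P.I_prime a by simp
      thus ?case using Suc.IH by blast
    qed
    show "P \<subseteq> PIdl\<^bsub>R\<^esub> a \<or> PIdl\<^bsub>R\<^esub> a \<subseteq> P"
    proof (cases "a \<in> P")
      case True thus ?thesis using cgenideal_minimal[OF P.is_ideal True] by blast
    next
      case False
      have "P \<subseteq> PIdl\<^bsub>R\<^esub> a"
      proof
        fix x assume x: "x \<in> P"
        hence xc: "x \<in> carrier R" by (rule P.Icarr)
        from K[OF xc a] show "x \<in> PIdl\<^bsub>R\<^esub> a"
        proof
          assume "a [^]\<^bsub>R\<^esub> N \<in> PIdl\<^bsub>R\<^esub> x"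
          hence "a [^]\<^bsub>R\<^esub> N \<in> P" using cgenideal_minimal[OF P.is_ideal x] by blast
          hence "a \<in> P" by (rule powP)
          thus "x \<in> PIdl\<^bsub>R\<^esub> a" using False by simp
        qed
      qed
      thus ?thesis by blast
    qed
  next
    show "\<exists>N::nat. \<forall>M. maximalideal M R \<longrightarrow>
              (\<forall>a\<in>M. \<forall>b\<in>M. a \<in> PIdl\<^bsub>R\<^esub> b \<or> b [^]\<^bsub>R\<^esub> N \<in> PIdl\<^bsub>R\<^esub> a)"
    proof (rule exI[of _ N], intro allI impI ballI)
      fix M a b assume M: "maximalideal M R" and ab: "a \<in> M" "b \<in> M"
      have MI: "ideal M R" using M by (rule maximalideal.axioms(1))
      have "a \<in> carrier R" by (rule ideal.Icarr[OF MI ab(1)])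
      moreover have "b \<in> carrier R" by (rule ideal.Icarr[OF MI ab(2)])
      ultimately show "a \<in> PIdl\<^bsub>R\<^esub> b \<or> b [^]\<^bsub>R\<^esub> N \<in> PIdl\<^bsub>R\<^esub> a" using K by blast
    qed
  qed
qed

end
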